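(* Let $S$ be an uncovered set of patterns and let $f_n$ denote the number of rooted labeled forests on $[n]$ avoiding $S$. Then $L_S=\lim_{n\to\infty}\frac{f_n^{1/n}}{n}$ equals $e^{-1}$ if and only if $S$ contains $12$ or $21$.
   Context: A rooted labeled forest on $[n]$ is an unordered forest on $n$ vertices, each component with a distinguished root, with distinct labels from $[n]$. A pattern of length $k$ is a permutation of $[k]$; an instance of it is a sequence of vertices $v_1,\dots,v_k$ with $v_i$ a strict ancestor of $v_{i+1}$ whose labels are in the same relative order as the pattern; a forest avoids $S$ if it contains no instance of any pattern in $S$. A set $S$ of patterns is covered if it contains a pattern $\pi$ of length $k$ with $\pi(1)=1$ and a pattern $\sigma$ of length $\ell$ with $\sigma(1)=\ell$; otherwise $S$ is uncovered. *)

theory Defs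
  imports Complex_Main
begin

text \<open>A rooted labeled forest on [n] = {1..n} is encoded by its parent function
  p :: nat => nat: p v = 0 means v is a root; p v is the parent of v otherwise.
  Outside [n] the function is 0, so each forest has a unique encoding.\<close>

definition parent_rel :: "nat \<Rightarrow> (nat \<Rightarrow> nat) \<Rightarrow> (nat \<times> nat) set" where
  "parent_rel n p = {(v, p v) | v. v \<in> {1..n} \<and> p v \<noteq> 0}"

definition rooted_forest :: "nat \<Rightarrow> (nat \<Rightarrow> nat) \<Rightarrow> bool" where
  "rooted_forest n p \<longleftrightarrow>
     (\<forall>v. v \<notin> {1..n} \<longrightarrow> p v = 0) \<and>
     (\<forall>v \<in> {1..n}. p v \<le> n) \<and>
     (\<forall>v. (v, v) \<notin> (parent_rel n p)\<^sup>+)"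

definition strict_ancestor :: "nat \<Rightarrow> (nat \<Rightarrow> nat) \<Rightarrow> nat \<Rightarrow> nat \<Rightarrow> bool" where
  "strict_ancestor n p a v \<longleftrightarrow> (v, a) \<in> (parent_rel n p)\<^sup>+"

definition is_pattern :: "nat list \<Rightarrow> bool" where
  "is_pattern \<pi> \<longleftrightarrow> \<pi> \<noteq> [] \<and> distinct \<pi> \<and> set \<pi> = {1..length \<pi>}"

definition is_instance :: "nat \<Rightarrow> (nat \<Rightarrow> nat) \<Rightarrow> nat list \<Rightarrow> nat list \<Rightarrow> bool" where
  "is_instance n p \<pi> vs \<longleftrightarrow>
     length vs = length \<pi> \<and>
     (\<forall>i. Suc i < length vs \<longrightarrow> strict_ancestor n p (vs ! i) (vs ! Suc i)) \<and>
     (\<forall>i < length vs. \<forall>j < length vs. vs ! i < vs ! j \<longleftrightarrow> \<pi> ! i < \<pi> ! j)"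

definition forest_avoids :: "nat \<Rightarrow> (nat \<Rightarrow> nat) \<Rightarrow> nat list set \<Rightarrow> bool" where
  "forest_avoids n p S \<longleftrightarrow> (\<forall>\<pi> \<in> S. \<not> (\<exists>vs. is_instance n p \<pi> vs))"

definition covered :: "nat list set \<Rightarrow> bool" where
  "covered S \<longleftrightarrow> (\<exists>\<pi> \<in> S. hd \<pi> = 1) \<and> (\<exists>\<sigma> \<in> S. hd \<sigma> = length \<sigma>)"

definition num_avoiding :: "nat list set \<Rightarrow> nat \<Rightarrow> nat" where
  "num_avoiding S n = card {p. rooted_forest n p \<and> forest_avoids n p S}"

end

theory Submission
  imports Defs "HOL-Library.FuncSet"
begin

definition RR :: "(nat \<Rightarrow> nat) \<Rightarrow> (nat \<times> nat) set" where
  "RR p = {(v, p v) | v. p v \<noteq> 0}"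

definition good :: "(nat \<Rightarrow> nat \<Rightarrow> bool) \<Rightarrow> nat set \<Rightarrow> (nat \<Rightarrow> nat) \<Rightarrow> bool" where
  "good lt A p \<longleftrightarrow> (\<forall>v. v \<notin> A \<longrightarrow> p v = 0) \<and> (\<forall>v \<in> A. p v \<in> A \<or> p v = 0) \<and>
     (\<forall>v. (v, v) \<notin> (RR p)\<^sup>+) \<and>
     (\<forall>x y z. (y, x) \<in> (RR p)\<^sup>+ \<longrightarrow> (z, y) \<in> (RR p)\<^sup>+ \<longrightarrow> lt x y \<and> lt x z)"

definition FF :: "(nat \<Rightarrow> nat \<Rightarrow> bool) \<Rightarrow> nat set \<Rightarrow> (nat \<Rightarrow> nat) set" where
  "FF lt A = {p. good lt A p}"

lemma RR_sub: "good lt A p \<Longrightarrow> RR p \<subseteq> A \<times> A"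
  unfolding good_def RR_def by auto

lemma RR_trancl_sub: "good lt A p \<Longrightarrow> (RR p)\<^sup>+ \<subseteq> A \<times> A"
  by (rule trancl_subset_Sigma[OF RR_sub])

lemma finite_FF: "finite A \<Longrightarrow> finite (FF lt A)"
proof -
  assume fA: "finite A"
  have "FF lt A \<subseteq> {f. \<forall>x. (x \<in> A \<longrightarrow> f x \<in> insert 0 A) \<and> (x \<notin> A \<longrightarrow> f x = 0)}"
    unfolding FF_def good_def by auto
  moreover have "finite {f. \<forall>x. (x \<in> A \<longrightarrow> f x \<in> insert 0 A) \<and> (x \<notin> A \<longrightarrow> f x = (0::nat))}"
    using fA by (intro finite_set_of_finite_funs) auto
  ultimately show ?thesis by (rule finite_subset)
qed

lemma zero_in_FF: "(\<lambda>_. 0) \<in> FF lt A"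
proof -
  have "RR (\<lambda>_. 0) = {}" unfolding RR_def by auto
  then show ?thesis unfolding FF_def good_def by auto
qed

lemma reach_root:
  assumes g: "good lt A p" and fA: "finite A"
  shows "\<exists>r. (v, r) \<in> (RR p)\<^sup>* \<and> p r = 0"
proof -
  have fin: "finite (RR p)" using RR_sub[OF g] fA by (meson finite_SigmaI finite_subset)
  have ac: "acyclic (RR p)" using g unfolding good_def acyclic_def by auto
  have wf: "wf ((RR p)\<inverse>)" by (rule finite_acyclic_wf_converse[OF fin ac])
  show ?thesis
  proof (induction v rule: wf_induct_rule[OF wf])
    case (1 v)
    show ?case
    proof (cases "p v = 0")
      case True then show ?thesis by blast
    next
      case False
      then have e: "(v, p v) \<in> RR p" unfolding RR_def by auto
      then obtain r where "(p v, r) \<in> (RR p)\<^sup>*" "p r = 0" using 1 by blast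
      then show ?thesis using e by (meson converse_rtrancl_into_rtrancl)
    qed
  qed
qed

definition comb1 :: "nat \<Rightarrow> nat set \<Rightarrow> (nat \<Rightarrow> nat) \<Rightarrow> (nat \<Rightarrow> nat) \<Rightarrow> nat \<Rightarrow> nat" where
  "comb1 a B p1 p2 = (\<lambda>v. if v \<in> B then (if p1 v = 0 then a else p1 v) else p2 v)"

lemma comb1_trancl:
  assumes aA: "a \<in> A" and B: "B \<subseteq> A - {a}"
    and g1: "good lt B p1" and g2: "good lt (A - {a} - B) p2"
  shows "(RR (comb1 a B p1 p2))\<^sup>+ \<subseteq> (RR p1)\<^sup>+ \<union> (RR p2)\<^sup>+ \<union> B \<times> {a}"
proof -
  let ?C = "A - {a} - B"
  let ?X = "(RR p1)\<^sup>+ \<union> (RR p2)\<^sup>+ \<union> B \<times> {a}"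
  have s1: "(RR p1)\<^sup>+ \<subseteq> B \<times> B" by (rule RR_trancl_sub[OF g1])
  have s2: "(RR p2)\<^sup>+ \<subseteq> ?C \<times> ?C" by (rule RR_trancl_sub[OF g2])
  have aB: "a \<notin> B" using B by auto
  have sub: "RR (comb1 a B p1 p2) \<subseteq> ?X"
  proof
    fix e assume "e \<in> RR (comb1 a B p1 p2)"
    then obtain v where e: "e = (v, comb1 a B p1 p2 v)" "comb1 a B p1 p2 v \<noteq> 0"
      unfolding RR_def by auto
    show "e \<in> ?X"
    proof (cases "v \<in> B")
      case True
      then show ?thesis using e unfolding comb1_def RR_def by (auto split: if_splits)
    next
      case False
      then show ?thesis using e unfolding comb1_def RR_def by auto
    qed
  qed
  have tr: "trans ?X"
  proof (rule transI)
    fix x y z assume xy: "(x, y) \<in> ?X" and yz: "(y, z) \<in> ?X"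
    show "(x, z) \<in> ?X"
      using xy yz s1 s2 aB by (auto intro: trancl_trans)
  qed
  have "(RR (comb1 a B p1 p2))\<^sup>+ \<subseteq> ?X\<^sup>+" by (rule trancl_mono_subset[OF sub])
  also have "\<dots> = ?X" by (rule trancl_id[OF tr])
  finally show ?thesis .
qed

lemma comb1_good:
  assumes aA: "a \<in> A" and B: "B \<subseteq> A - {a}" and lta: "\<forall>v\<in>A-{a}. lt a v"
    and g1: "good lt B p1" and g2: "good lt (A - {a} - B) p2"
  shows "good lt A (comb1 a B p1 p2)"
proof -
  let ?p = "comb1 a B p1 p2"
  let ?C = "A - {a} - B"
  have T: "(RR ?p)\<^sup>+ \<subseteq> (RR p1)\<^sup>+ \<union> (RR p2)\<^sup>+ \<union> B \<times> {a}"
    by (rule comb1_trancl[OF aA B g1 g2])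
  have s1: "(RR p1)\<^sup>+ \<subseteq> B \<times> B" by (rule RR_trancl_sub[OF g1])
  have s2: "(RR p2)\<^sup>+ \<subseteq> ?C \<times> ?C" by (rule RR_trancl_sub[OF g2])
  have aB: "a \<notin> B" using B by auto
  have sup: "\<forall>v. v \<notin> A \<longrightarrow> ?p v = 0"
    using B g2 unfolding good_def comb1_def by auto
  have rng: "\<forall>v \<in> A. ?p v \<in> A \<or> ?p v = 0"
    using B g1 g2 aA unfolding good_def comb1_def by fastforce
  have acy: "\<forall>v. (v, v) \<notin> (RR ?p)\<^sup>+"
  proof (intro allI notI)
    fix v assume "(v, v) \<in> (RR ?p)\<^sup>+"
    then have "(v, v) \<in> (RR p1)\<^sup>+ \<or> (v, v) \<in> (RR p2)\<^sup>+ \<or> (v \<in> B \<and> v = a)" using T by auto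
    then show False using g1 g2 aB unfolding good_def by auto
  qed
  have Q: "\<forall>x y z. (y, x) \<in> (RR ?p)\<^sup>+ \<longrightarrow> (z, y) \<in> (RR ?p)\<^sup>+ \<longrightarrow> lt x y \<and> lt x z"
  proof (intro allI impI)
    fix x y z assume yx: "(y, x) \<in> (RR ?p)\<^sup>+" and zy: "(z, y) \<in> (RR ?p)\<^sup>+"
    have yx': "(y, x) \<in> (RR p1)\<^sup>+ \<or> (y, x) \<in> (RR p2)\<^sup>+ \<or> (y \<in> B \<and> x = a)" using yx T by auto
    have zy': "(z, y) \<in> (RR p1)\<^sup>+ \<or> (z, y) \<in> (RR p2)\<^sup>+ \<or> (z \<in> B \<and> y = a)" using zy T by auto
    show "lt x y \<and> lt x z"
    proof -
      { assume c: "y \<in> B \<and> x = a"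
        then have "z \<in> A - {a}" using zy' s1 s2 B by auto
        then have ?thesis using c lta B by auto }
      moreover
      { assume c: "(y, x) \<in> (RR p1)\<^sup>+"
        then have "y \<in> B" using s1 by auto
        then have "(z, y) \<in> (RR p1)\<^sup>+" using zy' s2 aB by auto
        then have ?thesis using c g1 unfolding good_def by blast }
      moreover
      { assume c: "(y, x) \<in> (RR p2)\<^sup>+"
        then have "y \<in> ?C" using s2 by auto
        then have "(z, y) \<in> (RR p2)\<^sup>+" using zy' s1 by auto
        then have ?thesis using c g2 unfolding good_def by blast }
      ultimately show ?thesis using yx' by blast
    qed
  qed
  show ?thesis unfolding good_def using sup rng acy Q by blast
qed

lemma comb1_decode:
  assumes fA: "finite A" and z: "0 \<notin> A" and aA: "a \<in> A" and B: "B \<subseteq> A - {a}"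
    and g1: "good lt B p1" and g2: "good lt (A - {a} - B) p2"
  shows "{v \<in> A - {a}. (v, a) \<in> (RR (comb1 a B p1 p2))\<^sup>+} = B"
    and "(\<lambda>v. if v \<in> B then (if comb1 a B p1 p2 v = a then 0 else comb1 a B p1 p2 v) else 0) = p1"
    and "(\<lambda>v. if v \<in> B then 0 else comb1 a B p1 p2 v) = p2"
proof -
  let ?p = "comb1 a B p1 p2"
  let ?C = "A - {a} - B"
  have T: "(RR ?p)\<^sup>+ \<subseteq> (RR p1)\<^sup>+ \<union> (RR p2)\<^sup>+ \<union> B \<times> {a}"
    by (rule comb1_trancl[OF aA B g1 g2])
  have s1: "(RR p1)\<^sup>+ \<subseteq> B \<times> B" by (rule RR_trancl_sub[OF g1])
  have s2: "(RR p2)\<^sup>+ \<subseteq> ?C \<times> ?C" by (rule RR_trancl_sub[OF g2])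
  have aB: "a \<notin> B" using B by auto
  have a0: "a \<noteq> 0" using z aA by metis
  have fB: "finite B" using fA B by (meson finite_Diff finite_subset)
  have E1: "RR p1 \<subseteq> RR ?p"
  proof
    fix e assume "e \<in> RR p1"
    then obtain v where e: "e = (v, p1 v)" "p1 v \<noteq> 0" unfolding RR_def by auto
    then have "v \<in> B" using g1 unfolding good_def by auto
    then have "?p v = p1 v" using e unfolding comb1_def by auto
    then show "e \<in> RR ?p" using e unfolding RR_def by auto
  qed
  have inB: "(v, a) \<in> (RR ?p)\<^sup>+" if v: "v \<in> B" for v
  proof -
    obtain r where r: "(v, r) \<in> (RR p1)\<^sup>*" "p1 r = 0" using reach_root[OF g1 fB] by blast
    have rB: "r \<in> B"
    proof (cases "v = r")
      case True then show ?thesis using v by simp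
    next
      case False
      then have "(v, r) \<in> (RR p1)\<^sup>+" using r(1) by (meson rtranclD)
      then show ?thesis using s1 by auto
    qed
    have "?p r = a" using rB r(2) unfolding comb1_def by auto
    then have "(r, a) \<in> RR ?p" using a0 unfolding RR_def by force
    moreover have "(v, r) \<in> (RR ?p)\<^sup>*" using r(1) E1 by (meson rtrancl_mono subsetD)
    ultimately show ?thesis by (meson rtrancl_into_trancl1)
  qed
  show "{v \<in> A - {a}. (v, a) \<in> (RR ?p)\<^sup>+} = B"
  proof
    show "{v \<in> A - {a}. (v, a) \<in> (RR ?p)\<^sup>+} \<subseteq> B"
    proof
      fix v assume "v \<in> {v \<in> A - {a}. (v, a) \<in> (RR ?p)\<^sup>+}"
      then have "(v, a) \<in> (RR p1)\<^sup>+ \<or> (v, a) \<in> (RR p2)\<^sup>+ \<or> v \<in> B" using T by auto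
      then show "v \<in> B" using s1 s2 aB by auto
    qed
    show "B \<subseteq> {v \<in> A - {a}. (v, a) \<in> (RR ?p)\<^sup>+}" using inB B by auto
  qed
  show "(\<lambda>v. if v \<in> B then (if ?p v = a then 0 else ?p v) else 0) = p1"
  proof
    fix v show "(if v \<in> B then (if ?p v = a then 0 else ?p v) else 0) = p1 v"
    proof (cases "v \<in> B")
      case True
      then have "p1 v \<in> B \<or> p1 v = 0" using g1 unfolding good_def by auto
      then show ?thesis using True aB unfolding comb1_def by auto
    next
      case False then show ?thesis using g1 unfolding good_def by auto
    qed
  qed
  show "(\<lambda>v. if v \<in> B then 0 else ?p v) = p2"
  proof
    fix v show "(if v \<in> B then 0 else ?p v) = p2 v"
      using g2 unfolding good_def comb1_def by auto
  qed
qed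

lemma comb2_good:
  assumes aA: "a \<in> A" and r: "r \<in> A - {a}" and z: "0 \<notin> A"
    and g: "good lt (A - {a} - {r}) p"
  shows "good lt A (p(a := r))"
proof -
  let ?D = "A - {a} - {r}"
  have s: "(RR p)\<^sup>+ \<subseteq> ?D \<times> ?D" by (rule RR_trancl_sub[OF g])
  have pa: "p a = 0" "p r = 0" using g unfolding good_def by auto
  let ?X = "(RR p)\<^sup>+ \<union> {(a, r)}"
  have sub: "RR (p(a := r)) \<subseteq> ?X" unfolding RR_def by auto
  have tr: "trans ?X"
  proof (rule transI)
    fix x y w assume "(x, y) \<in> ?X" "(y, w) \<in> ?X"
    then show "(x, w) \<in> ?X" using s r by (auto intro: trancl_trans)
  qed
  have T: "(RR (p(a := r)))\<^sup>+ \<subseteq> ?X"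
    using trancl_mono_subset[OF sub] trancl_id[OF tr] by simp
  have sup: "\<forall>v. v \<notin> A \<longrightarrow> (p(a := r)) v = 0" using g aA unfolding good_def by auto
  have rng: "\<forall>v \<in> A. (p(a := r)) v \<in> A \<or> (p(a := r)) v = 0" using g r unfolding good_def by auto
  have acy: "\<forall>v. (v, v) \<notin> (RR (p(a := r)))\<^sup>+"
  proof (intro allI notI)
    fix v assume "(v, v) \<in> (RR (p(a := r)))\<^sup>+"
    then have "(v, v) \<in> (RR p)\<^sup>+ \<or> (v = a \<and> v = r)" using T by auto
    then show False using g r unfolding good_def by auto
  qed
  have Q: "\<forall>x y w. (y, x) \<in> (RR (p(a := r)))\<^sup>+ \<longrightarrow> (w, y) \<in> (RR (p(a := r)))\<^sup>+ \<longrightarrow> lt x y \<and> lt x w"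
  proof (intro allI impI)
    fix x y w assume yx: "(y, x) \<in> (RR (p(a := r)))\<^sup>+" and wy: "(w, y) \<in> (RR (p(a := r)))\<^sup>+"
    have yx': "(y, x) \<in> (RR p)\<^sup>+ \<or> (y = a \<and> x = r)" using yx T by auto
    have wy': "(w, y) \<in> (RR p)\<^sup>+ \<or> (w = a \<and> y = r)" using wy T by auto
    have "(y, x) \<in> (RR p)\<^sup>+ \<and> (w, y) \<in> (RR p)\<^sup>+" using yx' wy' s r by auto
    then show "lt x y \<and> lt x w" using g unfolding good_def by blast
  qed
  show ?thesis unfolding good_def using sup rng acy Q by blast
qed

lemma FF_rec:
  assumes fA: "finite A" and z: "0 \<notin> A" and aA: "a \<in> A" and lta: "\<forall>v\<in>A-{a}. lt a v"
  shows "(\<Sum>B\<in>Pow (A-{a}). card (FF lt B) * card (FF lt (A - {a} - B)))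
         + (\<Sum>r\<in>A-{a}. card (FF lt (A - {a} - {r}))) \<le> card (FF lt A)"
proof -
  let ?X = "A - {a}"
  define S1 where "S1 = (SIGMA B:Pow ?X. FF lt B \<times> FF lt (?X - B))"
  define f1 where "f1 = (\<lambda>(B, q). comb1 a B (fst q) (snd q))"
  define S2 where "S2 = (SIGMA r:?X. FF lt (?X - {r}))"
  define f2 where "f2 = (\<lambda>(r::nat, p::nat\<Rightarrow>nat). p(a := r))"
  have fX: "finite ?X" using fA by auto
  have fS1: "finite S1" unfolding S1_def using fX
    by (intro finite_SigmaI finite_cartesian_product finite_FF) (auto intro: finite_subset)
  have fS2: "finite S2" unfolding S2_def using fX
    by (intro finite_SigmaI finite_FF) auto
  have cS1: "card S1 = (\<Sum>B\<in>Pow ?X. card (FF lt B) * card (FF lt (?X - B)))"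
    unfolding S1_def using fX
    by (subst card_SigmaI) (auto simp: card_cartesian_product intro: finite_subset finite_FF)
  have cS2: "card S2 = (\<Sum>r\<in>?X. card (FF lt (?X - {r})))"
    unfolding S2_def using fX by (subst card_SigmaI) (auto intro: finite_FF)
  have i1: "inj_on f1 S1"
  proof (rule inj_onI)
    fix x y assume x: "x \<in> S1" and y: "y \<in> S1" and e: "f1 x = f1 y"
    obtain B p1 p2 where xx: "x = (B, (p1, p2))" by (metis prod.collapse)
    obtain B' p1' p2' where yy: "y = (B', (p1', p2'))" by (metis prod.collapse)
    have h: "B \<subseteq> ?X" "good lt B p1" "good lt (?X - B) p2"
      using x unfolding xx S1_def FF_def by auto
    have h': "B' \<subseteq> ?X" "good lt B' p1'" "good lt (?X - B') p2'"
      using y unfolding yy S1_def FF_def by auto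
    have e': "comb1 a B p1 p2 = comb1 a B' p1' p2'" using e unfolding xx yy f1_def by simp
    note d = comb1_decode[OF fA z aA h] and d' = comb1_decode[OF fA z aA h']
    have "B = B'" using d(1) d'(1) e' by simp
    moreover have "p1 = p1'" using d(2) d'(2) e' \<open>B = B'\<close> by metis
    moreover have "p2 = p2'" using d(3) d'(3) e' \<open>B = B'\<close> by metis
    ultimately show "x = y" unfolding xx yy by simp
  qed
  have i2: "inj_on f2 S2"
  proof (rule inj_onI)
    fix x y assume x: "x \<in> S2" and y: "y \<in> S2" and e: "f2 x = f2 y"
    obtain r p where xx: "x = (r, p)" by (metis prod.collapse)
    obtain r' p' where yy: "y = (r', p')" by (metis prod.collapse)
    have h: "r \<in> ?X" "good lt (?X - {r}) p" using x unfolding xx S2_def FF_def by auto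
    have h': "r' \<in> ?X" "good lt (?X - {r'}) p'" using y unfolding yy S2_def FF_def by auto
    have e': "p(a := r) = p'(a := r')" using e unfolding xx yy f2_def by simp
    have "r = r'" using fun_cong[OF e', of a] by simp
    moreover have "p a = 0" "p' a = 0" using h(2) h'(2) unfolding good_def by auto
    ultimately have "p = p'" using e' by (metis fun_upd_triv fun_upd_upd)
    then show "x = y" unfolding xx yy using \<open>r = r'\<close> by simp
  qed
  have sub1: "f1 ` S1 \<subseteq> FF lt A"
  proof
    fix p assume "p \<in> f1 ` S1"
    then obtain x where x: "x \<in> S1" "p = f1 x" by auto
    obtain B p1 p2 where xx: "x = (B, (p1, p2))" by (metis prod.collapse)
    have "B \<subseteq> ?X" "good lt B p1" "good lt (?X - B) p2" "p = comb1 a B p1 p2"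
      using x unfolding xx S1_def f1_def FF_def by auto
    then show "p \<in> FF lt A" using comb1_good[of a A B lt p1 p2] aA lta unfolding FF_def by auto
  qed
  have sub2: "f2 ` S2 \<subseteq> FF lt A"
  proof
    fix p assume "p \<in> f2 ` S2"
    then obtain r q where "r \<in> ?X" "good lt (?X - {r}) q" "p = q(a := r)"
      unfolding S2_def f2_def FF_def by auto
    then show "p \<in> FF lt A" using comb2_good[of a A r lt q] aA z unfolding FF_def by auto
  qed
  have disj: "f1 ` S1 \<inter> f2 ` S2 = {}"
  proof -
    have "p a = 0" if pin: "p \<in> f1 ` S1" for p
    proof -
      obtain x where x: "x \<in> S1" "p = f1 x" using pin by blast
      obtain B p1 p2 where xx: "x = (B, (p1, p2))" by (metis prod.collapse)
      have "B \<subseteq> ?X" "good lt (?X - B) p2" "p = comb1 a B p1 p2"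
        using x unfolding xx S1_def f1_def FF_def by auto
      then show ?thesis unfolding comb1_def good_def by auto
    qed
    moreover have "p a \<noteq> 0" if pin: "p \<in> f2 ` S2" for p
    proof -
      obtain r q where "r \<in> ?X" "p = q(a := r)"
        using pin unfolding S2_def f2_def by auto
      then show ?thesis using z by (metis DiffD1 fun_upd_same)
    qed
    ultimately show ?thesis by blast
  qed
  have "card (f1 ` S1) + card (f2 ` S2) = card (f1 ` S1 \<union> f2 ` S2)"
    using fS1 fS2 disj by (simp add: card_Un_disjoint)
  also have "\<dots> \<le> card (FF lt A)"
    using sub1 sub2 finite_FF[OF fA] by (intro card_mono) auto
  finally have "card S1 + card S2 \<le> card (FF lt A)"
    using card_image[OF i1] card_image[OF i2] by simp
  then show ?thesis using cS1 cS2 by (simp add: Diff_insert2[symmetric] insert_commute)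
qed

definition hh :: "nat \<Rightarrow> real" where
  "hh k = (if k \<le> 1 then 1 else (11/10) * (21/20)^k)"

lemma hh_pos: "hh k > 0" unfolding hh_def by auto

lemma hh_ineq:
  assumes "1 \<le> m"
  shows "real (m + 1) * hh (m + 1) \<le> (\<Sum>k\<le>m. hh k * hh (m - k)) + hh (m - 1)"
proof -
  consider "m = 1" | "m = 2" | "m = 3" | j where "m = j + 4"
    using assms by (metis add.commute le_Suc_ex numeral_3_eq_3 numeral_2_eq_2 not_less_eq_eq 
        One_nat_def add_2_eq_Suc' add_Suc_right le_antisym nat_le_linear numeral_Bit0 numeral_One)
  then show ?thesis
  proof cases
    case 1 then show ?thesis by (simp add: hh_def)
  next
    case 2 then show ?thesis by (simp add: hh_def atMost_Suc eval_nat_numeral)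
  next
    case 3 then show ?thesis by (simp add: hh_def atMost_Suc eval_nat_numeral)
  next
    case 4
    define F where "F k = hh k * hh (m - k)" for k
    define c :: real where "c = 11/10"
    define u :: real where "u = 21/20"
    define P where "P = u ^ j"
    have P0: "P > 0" unfolding P_def u_def by simp
    have hk: "hh k = c * u ^ k" if "2 \<le> k" for k using that unfolding hh_def c_def u_def by auto
    have split: "(\<Sum>k\<le>m. F k) = F 0 + F 1 + (\<Sum>i\<le>j. F (i + 2)) + F (j + 3) + F (j + 4)"
    proof -
      have m4: "m = Suc (Suc (j + 2))" using 4 by simp
      have a1: "(\<Sum>k\<le>m. F k) = (\<Sum>k\<le>j + 2. F k) + F (j + 3) + F (j + 4)"
        unfolding m4 by (simp add: eval_nat_numeral)
      have a2: "(\<Sum>k\<le>Suc (Suc j). F k) = F 0 + F 1 + (\<Sum>i\<le>j. F (Suc (Suc i)))"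
        by (simp only: sum.atMost_Suc_shift) simp
      show ?thesis using a1 a2 by (simp add: eval_nat_numeral)
    qed
    have mid: "(\<Sum>i\<le>j. F (i + 2)) = real (j + 1) * (c * c * u ^ (j + 4))"
    proof -
      have "F (i + 2) = c * c * u ^ (j + 4)" if "i \<le> j" for i
      proof -
        have "m - (i + 2) = j + 2 - i" using 4 that by simp
        then have "F (i + 2) = (c * u ^ (i + 2)) * (c * u ^ (j + 2 - i))"
          unfolding F_def using that by (simp add: hk)
        also have "\<dots> = c * c * (u ^ (i + 2) * u ^ (j + 2 - i))" by simp
        also have "u ^ (i + 2) * u ^ (j + 2 - i) = u ^ (j + 4)"
        proof -
          have "i + 2 + (j + 2 - i) = j + 4" using that by simp
          then show ?thesis by (metis power_add)
        qed
        finally show ?thesis .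
      qed
      then have "(\<Sum>i\<le>j. F (i + 2)) = (\<Sum>i\<le>j. c * c * u ^ (j + 4))" by (intro sum.cong) auto
      then show ?thesis by simp
    qed
    have h01: "hh 0 = 1" "hh 1 = 1" unfolding hh_def by auto
    have mm: "m - 0 = j + 4" "m - 1 = j + 3" "m - (j + 3) = 1" "m - (j + 4) = 0" "m + 1 = j + 5"
      using 4 by auto
    have F0: "F 0 = c * u ^ (j + 4)" unfolding F_def mm h01 by (simp add: hk)
    have F1: "F 1 = c * u ^ (j + 3)" unfolding F_def mm h01 by (simp add: hk)
    have F3: "F (j + 3) = c * u ^ (j + 3)" unfolding F_def mm h01 by (simp add: hk)
    have F4: "F (j + 4) = c * u ^ (j + 4)" unfolding F_def mm h01 by (simp add: hk)
    have H: "hh (m - 1) = c * u ^ (j + 3)" unfolding mm by (simp add: hk)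
    have L: "real (m + 1) * hh (m + 1) = real (j + 5) * (c * u ^ (j + 5))" unfolding mm by (simp add: hk)
    have key: "real (j + 5) * (c * u ^ 5) \<le> 2 * c * u ^ 4 + 3 * c * u ^ 3 + real (j + 1) * (c * c * u ^ 4)"
      unfolding c_def u_def by (simp add: eval_nat_numeral algebra_simps)
    have "real (j + 5) * (c * u ^ (j + 5)) = P * (real (j + 5) * (c * u ^ 5))"
      unfolding P_def by (simp add: power_add)
    also have "\<dots> \<le> P * (2 * c * u ^ 4 + 3 * c * u ^ 3 + real (j + 1) * (c * c * u ^ 4))"
      using key P0 by (intro mult_left_mono) auto
    also have "\<dots> = F 0 + F 1 + (\<Sum>i\<le>j. F (i + 2)) + F (j + 3) + F (j + 4) + hh (m - 1)"
      unfolding F0 F1 F3 F4 H mid P_def by (simp add: power_add algebra_simps)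
    finally show ?thesis using L split unfolding F_def by simp
  qed
qed

lemma sum_Pow_card:
  fixes g :: "nat \<Rightarrow> real"
  assumes fX: "finite X"
  shows "(\<Sum>B\<in>Pow X. g (card B)) = (\<Sum>k\<le>card X. real (card X choose k) * g k)"
proof -
  have "(\<Sum>B\<in>Pow X. g (card B)) = (\<Sum>k\<le>card X. \<Sum>B\<in>{B \<in> Pow X. card B = k}. g (card B))"
    using fX by (intro sum.group[symmetric]) (auto intro: card_mono)
  also have "\<dots> = (\<Sum>k\<le>card X. real (card X choose k) * g k)"
  proof (rule sum.cong[OF refl])
    fix k
    have "(\<Sum>B\<in>{B \<in> Pow X. card B = k}. g (card B)) = (\<Sum>B\<in>{B \<in> Pow X. card B = k}. g k)"
      by (rule sum.cong) auto
    also have "\<dots> = real (card {B \<in> Pow X. card B = k}) * g k" by simp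
    also have "{B \<in> Pow X. card B = k} = {B. B \<subseteq> X \<and> card B = k}" by auto
    finally show "(\<Sum>B\<in>{B \<in> Pow X. card B = k}. g (card B)) = real (card X choose k) * g k"
      using n_subsets[OF fX, of k] by simp
  qed
  finally show ?thesis .
qed

lemma FF_lower:
  assumes hyp: "\<And>A. finite A \<Longrightarrow> A \<noteq> {} \<Longrightarrow> \<exists>a\<in>A. \<forall>v\<in>A-{a}. lt a v"
  shows "finite A \<Longrightarrow> 0 \<notin> A \<Longrightarrow> fact (card A) * hh (card A) \<le> real (card (FF lt A))"
proof (induction "card A" arbitrary: A rule: less_induct)
  case less
  note fA = less.prems(1) and z = less.prems(2)
  have c1: "1 \<le> card (FF lt A)"
    using zero_in_FF[of lt A] finite_FF[OF fA] by (metis One_nat_def Suc_leI card_gt_0_iff empty_iff)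
  show ?case
  proof (cases "card A \<le> 1")
    case True
    then have "card A = 0 \<or> card A = 1" by auto
    then show ?thesis using c1 by (auto simp: hh_def)
  next
    case False
    then have "A \<noteq> {}" by auto
    then obtain a where aA: "a \<in> A" and lta: "\<forall>v\<in>A-{a}. lt a v" using hyp[OF fA] by blast
    define X where "X = A - {a}"
    define m where "m = card X"
    have fX: "finite X" unfolding X_def using fA by auto
    have cA: "card A = m + 1" unfolding m_def X_def using aA fA by (metis Suc_eq_plus1 card_Suc_Diff1)
    have m1: "1 \<le> m" using False cA by simp
    have zX: "0 \<notin> X" unfolding X_def using z by auto
    have IH: "fact (card B) * hh (card B) \<le> real (card (FF lt B))" if "B \<subseteq> X" for B
    proof -
      have "finite B" using that fX by (rule finite_subset)
      moreover have "card B < card A" using that fX cA m_def by (metis card_mono less_add_one le_less_trans)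
      moreover have "0 \<notin> B" using that zX by auto
      ultimately show ?thesis using less.hyps by blast
    qed
    have R: "(\<Sum>B\<in>Pow X. card (FF lt B) * card (FF lt (X - B)))
         + (\<Sum>r\<in>X. card (FF lt (X - {r}))) \<le> card (FF lt A)"
      using FF_rec[of A a lt, OF fA z aA lta] unfolding X_def .
    define g where "g k = fact k * hh k * (fact (m - k) * hh (m - k))" for k
    have s1: "(\<Sum>B\<in>Pow X. g (card B)) \<le> (\<Sum>B\<in>Pow X. real (card (FF lt B) * card (FF lt (X - B))))"
    proof (rule sum_mono)
      fix B assume B: "B \<in> Pow X"
      have cXB: "card (X - B) = m - card B" unfolding m_def using B fX
        by (simp add: card_Diff_subset finite_subset)
      have a: "fact (card B) * hh (card B) \<le> real (card (FF lt B))" using IH B by auto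
      have b: "fact (m - card B) * hh (m - card B) \<le> real (card (FF lt (X - B)))"
        using IH[of "X - B"] cXB by auto
      have "g (card B) \<le> real (card (FF lt B)) * real (card (FF lt (X - B)))"
        unfolding g_def using a b hh_pos
        by (intro mult_mono) (auto intro!: mult_nonneg_nonneg less_imp_le)
      then show "g (card B) \<le> real (card (FF lt B) * card (FF lt (X - B)))" by simp
    qed
    have s1': "(\<Sum>B\<in>Pow X. g (card B)) = fact m * (\<Sum>k\<le>m. hh k * hh (m - k))"
    proof -
      have "(\<Sum>B\<in>Pow X. g (card B)) = (\<Sum>k\<le>m. real (m choose k) * g k)"
        using sum_Pow_card[OF fX, of g] unfolding m_def by simp
      also have "\<dots> = (\<Sum>k\<le>m. fact m * (hh k * hh (m - k)))"
      proof (rule sum.cong[OF refl])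
        fix k assume "k \<in> {..m}"
        then have "fact k * fact (m - k) * (m choose k) = (fact m :: nat)"
          by (intro binomial_fact_lemma) auto
        then have "fact k * fact (m - k) * real (m choose k) = fact m"
          by (metis of_nat_fact of_nat_mult)
        then show "real (m choose k) * g k = fact m * (hh k * hh (m - k))"
          unfolding g_def by (metis (no_types, lifting) mult.commute mult.left_commute)
      qed
      also have "\<dots> = fact m * (\<Sum>k\<le>m. hh k * hh (m - k))" by (simp add: sum_distrib_left)
      finally show ?thesis .
    qed
    have s2: "fact m * hh (m - 1) \<le> (\<Sum>r\<in>X. real (card (FF lt (X - {r}))))"
    proof -
      have "(\<Sum>r\<in>X. fact (m - 1) * hh (m - 1)) \<le> (\<Sum>r\<in>X. real (card (FF lt (X - {r}))))"
      proof (rule sum_mono)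
        fix r assume r: "r \<in> X"
        have "card (X - {r}) = m - 1" unfolding m_def using r fX by simp
        then show "fact (m - 1) * hh (m - 1) \<le> real (card (FF lt (X - {r})))"
          using IH[of "X - {r}"] by auto
      qed
      moreover have "(\<Sum>r\<in>X. fact (m - 1) * hh (m - 1)) = fact m * hh (m - 1)"
      proof -
        have "(\<Sum>r\<in>X. fact (m - 1) * hh (m - 1)) = real m * (fact (m - 1) * hh (m - 1))"
          unfolding m_def by simp
        also have "real m * fact (m - 1) = (fact m :: real)" using m1
          by (cases m) auto
        ultimately show ?thesis by (metis mult.assoc)
      qed
      ultimately show ?thesis by linarith
    qed
    have "fact (card A) * hh (card A) = fact m * (real (m + 1) * hh (m + 1))"
      unfolding cA by simp
    also have "\<dots> \<le> fact m * ((\<Sum>k\<le>m. hh k * hh (m - k)) + hh (m - 1))"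
      using hh_ineq[OF m1] by (intro mult_left_mono) auto
    also have "\<dots> = (\<Sum>B\<in>Pow X. g (card B)) + fact m * hh (m - 1)"
      unfolding s1' by (simp add: algebra_simps)
    also have "\<dots> \<le> (\<Sum>B\<in>Pow X. real (card (FF lt B) * card (FF lt (X - B))))
                 + (\<Sum>r\<in>X. real (card (FF lt (X - {r}))))"
      using s1 s2 by linarith
    also have "\<dots> \<le> real (card (FF lt A))"
    proof -
      have "real ((\<Sum>B\<in>Pow X. card (FF lt B) * card (FF lt (X - B)))
         + (\<Sum>r\<in>X. card (FF lt (X - {r})))) \<le> real (card (FF lt A))"
        using R by (simp only: of_nat_le_iff)
      then show ?thesis by (simp only: of_nat_add of_nat_sum)
    qed
    finally show ?thesis .
  qed
qed

lemma ln_fact_bounds: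
  assumes "1 \<le> n"
  shows "real n * ln n - (real n - 1) \<le> ln (fact n) \<and> ln (fact n) \<le> (real n + 1) * ln n - (real n - 1)"
  using assms
proof (induction n rule: dec_induct)
  case base then show ?case by simp
next
  case (step n)
  have n0: "(0::real) < n" using step.hyps by simp
  have lf: "ln (fact (Suc n) :: real) = ln (fact n) + ln (real (Suc n))"
    by (simp add: ln_mult fact_Suc del: of_nat_Suc)
  have d1: "ln (real (Suc n)) - ln n \<le> 1 / n"
  proof -
    have "1 + 1 / real n = real (Suc n) / n" using n0 by (simp add: field_simps)
    then have "ln (1 + 1 / n) = ln (real (Suc n)) - ln n" using n0 by (simp add: ln_div)
    then have "ln (real (Suc n)) - ln n = ln (1 + 1 / n)" by simp
    also have "\<dots> \<le> 1 / n" by (rule ln_add_one_self_le_self) simp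
    finally show ?thesis .
  qed
  have d2: "1 / (n + 1) \<le> ln (real (Suc n)) - ln n"
  proof -
    have "ln (real n / (n + 1)) \<le> real n / (n + 1) - 1" using n0 by (intro ln_le_minus_one) simp
    moreover have "ln (real n / (n + 1)) = ln n - ln (real (Suc n))" using n0 by (simp add: ln_div)
    moreover have "real n / (n + 1) - 1 = - (1 / (n + 1))" using n0 by (simp add: field_simps)
    ultimately show ?thesis by linarith
  qed
  have e1: "real n * (ln (real (Suc n)) - ln n) \<le> 1"
    using mult_left_mono[OF d1, of "real n"] n0 by simp
  have e2: "1 \<le> (real n + 1) * (ln (real (Suc n)) - ln n)"
  proof -
    have a: "(real n + 1) * (1 / (n + 1)) = 1" using n0 by simp
    have b: "(real n + 1) * (1 / (n + 1)) \<le> (real n + 1) * (ln (real (Suc n)) - ln n)"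
      by (rule mult_left_mono[OF d2]) simp
    from a b show ?thesis by linarith
  qed
  show ?case using step.IH e1 e2 unfolding lf by (simp add: algebra_simps)
qed

lemma root_fact_limit: "(\<lambda>n. root n (fact n) / real n) \<longlonglongrightarrow> exp (-1)"
proof -
  define a where "a n = ln (fact n) / real n - ln (real n)" for n
  have eq: "\<forall>\<^sub>F n in sequentially. root n (fact n) / real n = exp (a n)"
  proof (rule eventually_sequentiallyI[of 1])
    fix n :: nat assume n: "1 \<le> n"
    have fp: "(0::real) < fact n" by simp
    have "root n (fact n) = exp (ln (fact n) / n)"
      using n fp by (simp add: root_powr_inverse powr_def)
    then show "root n (fact n) / real n = exp (a n)"
      unfolding a_def using n by (simp add: exp_diff)
  qed
  have lo: "\<forall>\<^sub>F n in sequentially. 1 / real n - 1 \<le> a n"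
  proof (rule eventually_sequentiallyI[of 1])
    fix n :: nat assume n: "1 \<le> n"
    have "real n * ln n - (real n - 1) \<le> ln (fact n)" using ln_fact_bounds[OF n] by simp
    then have "(real n * ln n - (real n - 1)) / n \<le> ln (fact n) / n"
      using n by (intro divide_right_mono) auto
    then show "1 / real n - 1 \<le> a n" unfolding a_def using n by (simp add: field_simps)
  qed
  have hi: "\<forall>\<^sub>F n in sequentially. a n \<le> ln (real n) / real n + (1 / real n - 1)"
  proof (rule eventually_sequentiallyI[of 1])
    fix n :: nat assume n: "1 \<le> n"
    have "ln (fact n) \<le> (real n + 1) * ln n - (real n - 1)" using ln_fact_bounds[OF n] by simp
    then have "ln (fact n) / n \<le> ((real n + 1) * ln n - (real n - 1)) / n"
      using n by (intro divide_right_mono) auto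
    moreover have "((real n + 1) * ln n - (real n - 1)) / n = ln n + ln n / n + (1 / n - 1)"
      using n by (simp add: field_simps)
    ultimately show "a n \<le> ln (real n) / real n + (1 / real n - 1)" unfolding a_def
      by linarith
  qed
  have t1: "(\<lambda>n. 1 / real n - 1) \<longlonglongrightarrow> 0 - 1"
    by (intro tendsto_diff lim_const_over_n tendsto_const)
  have lnn: "(\<lambda>n. ln (real n) / real n) \<longlonglongrightarrow> 0"
  proof -
    have "(\<lambda>n. ln (root n (real n))) \<longlonglongrightarrow> ln 1"
      by (intro tendsto_ln LIMSEQ_root) simp
    moreover have "\<forall>\<^sub>F n in sequentially. ln (root n (real n)) = ln (real n) / real n"
      by (rule eventually_sequentiallyI[of 1]) (simp add: ln_root)
    ultimately show ?thesis by (simp add: Lim_transform_eventually)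
  qed
  have t2: "(\<lambda>n. ln (real n) / real n + (1 / real n - 1)) \<longlonglongrightarrow> 0 + (0 - 1)"
    by (intro tendsto_add lnn t1)
  have "a \<longlonglongrightarrow> -1"
    using t1 t2 by (intro tendsto_sandwich[OF lo hi]) auto
  then have "(\<lambda>n. exp (a n)) \<longlonglongrightarrow> exp (-1)" by (rule tendsto_exp)
  moreover have "\<forall>\<^sub>F n in sequentially. exp (a n) = root n (fact n) / real n"
    using eq by (simp add: eq_commute)
  ultimately show ?thesis by (rule Lim_transform_eventually)
qed

lemma parent_rel_RR: "(\<forall>v. v \<notin> {1..n} \<longrightarrow> p v = 0) \<Longrightarrow> parent_rel n p = RR p"
  unfolding parent_rel_def RR_def by force

lemma card_funs:
  assumes fI: "finite I"
  shows "card {p :: nat \<Rightarrow> nat. (\<forall>v. v \<notin> I \<longrightarrow> p v = 0) \<and> (\<forall>v\<in>I. p v \<in> B v)} = (\<Prod>v\<in>I. card (B v))"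
proof -
  let ?S = "{p :: nat \<Rightarrow> nat. (\<forall>v. v \<notin> I \<longrightarrow> p v = 0) \<and> (\<forall>v\<in>I. p v \<in> B v)}"
  have "bij_betw (\<lambda>p. restrict p I) ?S (PiE I B)"
  proof (rule bij_betw_byWitness[where f' = "\<lambda>f v. if v \<in> I then f v else 0"])
    show "\<forall>a\<in>?S. (\<lambda>v. if v \<in> I then restrict a I v else 0) = a"
      by (auto simp: fun_eq_iff)
    show "\<forall>a'\<in>PiE I B. restrict (\<lambda>v. if v \<in> I then a' v else 0) I = a'"
      by (auto simp: fun_eq_iff PiE_def extensional_def)
    show "(\<lambda>p. restrict p I) ` ?S \<subseteq> PiE I B" by auto
    show "(\<lambda>f v. if v \<in> I then f v else 0) ` PiE I B \<subseteq> ?S" by auto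
  qed
  then have "card ?S = card (PiE I B)" by (rule bij_betw_same_card)
  also have "\<dots> = (\<Prod>v\<in>I. card (B v))" by (rule card_PiE[OF fI])
  finally show ?thesis .
qed

lemma finite_forests: "finite {p. rooted_forest n p \<and> P p}"
proof -
  have "{p. rooted_forest n p \<and> P p} \<subseteq>
        {f. \<forall>x. (x \<in> {1..n} \<longrightarrow> f x \<in> {0..n}) \<and> (x \<notin> {1..n} \<longrightarrow> f x = 0)}"
    unfolding rooted_forest_def by auto
  moreover have "finite {f. \<forall>x. (x \<in> {1..n} \<longrightarrow> f x \<in> {0..n}) \<and> (x \<notin> {1..n} \<longrightarrow> f x = (0::nat))}"
    by (intro finite_set_of_finite_funs) auto
  ultimately show ?thesis by (rule finite_subset)
qed

lemma instance_chain:
  assumes "is_instance n p \<pi> vs" "i < j" "j < length vs"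
  shows "(vs ! j, vs ! i) \<in> (parent_rel n p)\<^sup>+"
  using assms(2,3)
proof (induction j)
  case 0 then show ?case by simp
next
  case (Suc j)
  have e: "(vs ! Suc j, vs ! j) \<in> (parent_rel n p)\<^sup>+"
    using assms(1) Suc.prems unfolding is_instance_def strict_ancestor_def by auto
  show ?case
  proof (cases "i = j")
    case True then show ?thesis using e by simp
  next
    case False
    then have "(vs ! j, vs ! i) \<in> (parent_rel n p)\<^sup>+" using Suc by auto
    then show ?thesis using e by (meson trancl_trans)
  qed
qed

lemma pat_min:
  assumes "is_pattern \<pi>" "\<forall>j. 1 \<le> j \<and> j < length \<pi> \<longrightarrow> \<pi> ! 0 < \<pi> ! j"
  shows "hd \<pi> = 1"
proof -
  have ne: "\<pi> \<noteq> []" and st: "set \<pi> = {1..length \<pi>}" using assms(1) unfolding is_pattern_def by auto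
  have "1 \<in> set \<pi>" using st ne by (auto simp: Suc_le_eq)
  then obtain j where j: "j < length \<pi>" "\<pi> ! j = 1" by (meson in_set_conv_nth)
  have "j = 0"
  proof (rule ccontr)
    assume "j \<noteq> 0"
    then have "1 \<le> j" by simp
    then have "\<pi> ! 0 < \<pi> ! j" using assms(2) j(1) by blast
    then have "\<pi> ! 0 < 1" using j(2) by simp
    moreover have "\<pi> ! 0 \<in> set \<pi>" using ne by simp
    ultimately show False using st by auto
  qed
  then show ?thesis using j ne by (simp add: hd_conv_nth)
qed

lemma pat_max:
  assumes "is_pattern \<pi>" "\<forall>j. 1 \<le> j \<and> j < length \<pi> \<longrightarrow> \<pi> ! j < \<pi> ! 0"
  shows "hd \<pi> = length \<pi>"
proof -
  have ne: "\<pi> \<noteq> []" and st: "set \<pi> = {1..length \<pi>}" using assms(1) unfolding is_pattern_def by auto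
  have "length \<pi> \<in> set \<pi>" using st ne by (auto simp: Suc_le_eq)
  then obtain j where j: "j < length \<pi>" "\<pi> ! j = length \<pi>" by (meson in_set_conv_nth)
  have "j = 0"
  proof (rule ccontr)
    assume "j \<noteq> 0"
    then have "1 \<le> j" by simp
    then have "\<pi> ! j < \<pi> ! 0" using assms(2) j(1) by blast
    then have "length \<pi> < \<pi> ! 0" using j(2) by simp
    moreover have "\<pi> ! 0 \<in> set \<pi>" using ne by simp
    ultimately show False using st by auto
  qed
  then show ?thesis using j ne by (simp add: hd_conv_nth)
qed

lemma pat_short:
  assumes "is_pattern \<pi>" "length \<pi> \<le> 2"
  shows "\<pi> = [1] \<or> \<pi> = [1, 2] \<or> \<pi> = [2, 1]"
proof -
  have ne: "\<pi> \<noteq> []" and d: "distinct \<pi>" and st: "set \<pi> = {1..length \<pi>}"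
    using assms(1) unfolding is_pattern_def by auto
  have l12: "length \<pi> = 1 \<or> length \<pi> = 2" using assms(2) ne
    by (cases "length \<pi>") auto
  show ?thesis
  proof (cases "length \<pi> = 1")
    case True
    then obtain a where a: "\<pi> = [a]" by (cases \<pi>) auto
    then have "a = 1" using st by simp
    then show ?thesis using a by simp
  next
    case False
    then have 2: "length \<pi> = 2" using l12 by simp
    then obtain a b where ab: "\<pi> = [a, b]"
      by (cases \<pi>; cases "tl \<pi>") auto
    have "{a, b} = {1..length \<pi>}" using st ab by simp
    also have "\<dots> = {1, 2}" unfolding 2 by auto
    finally have s: "{a, b} = {1, 2}" .
    have "a \<noteq> b" using d ab by simp
    then have "(a = 1 \<and> b = 2) \<or> (a = 2 \<and> b = 1)" using s by (auto simp: doubleton_eq_iff)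
    then show ?thesis using ab by auto
  qed
qed

lemma FF_support: "p \<in> FF lt {1..n} \<Longrightarrow> \<forall>v. v \<notin> {1..n} \<longrightarrow> p v = 0"
  unfolding FF_def good_def by auto

lemma FF_rooted: "p \<in> FF lt {1..n} \<Longrightarrow> rooted_forest n p"
proof -
  assume p: "p \<in> FF lt {1..n}"
  have pr: "parent_rel n p = RR p" using parent_rel_RR[OF FF_support[OF p]] .
  show ?thesis using p unfolding rooted_forest_def pr FF_def good_def by fastforce
qed

lemma FF_chain:
  assumes p: "p \<in> FF lt {1..n}" and inst: "is_instance n p \<pi> vs" and l3: "3 \<le> length \<pi>"
  shows "\<forall>j. 1 \<le> j \<and> j < length \<pi> \<longrightarrow> lt (vs ! 0) (vs ! j)"
proof (intro allI impI)
  fix j assume j: "1 \<le> j \<and> j < length \<pi>"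
  have pr: "parent_rel n p = RR p" using parent_rel_RR[OF FF_support[OF p]] .
  have lv: "length vs = length \<pi>" using inst unfolding is_instance_def by simp
  have Q: "\<And>x y z. (y, x) \<in> (RR p)\<^sup>+ \<Longrightarrow> (z, y) \<in> (RR p)\<^sup>+ \<Longrightarrow> lt x y \<and> lt x z"
    using p unfolding FF_def good_def by blast
  have ch: "\<And>a b. a < b \<Longrightarrow> b < length \<pi> \<Longrightarrow> (vs ! b, vs ! a) \<in> (RR p)\<^sup>+"
    using instance_chain[OF inst] lv pr by auto
  show "lt (vs ! 0) (vs ! j)"
  proof (cases "j = 1")
    case True
    have "lt (vs ! 0) (vs ! 1) \<and> lt (vs ! 0) (vs ! 2)"
      using Q[OF ch[of 0 1] ch[of 1 2]] l3 by auto
    then show ?thesis using True by simp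
  next
    case False
    then have "lt (vs ! 0) (vs ! 1) \<and> lt (vs ! 0) (vs ! j)"
      using Q[OF ch[of 0 1] ch[of 1 j]] l3 j by auto
    then show ?thesis by simp
  qed
qed

lemma instance_order:
  assumes "is_instance n p \<pi> vs" "i < length \<pi>" "j < length \<pi>"
  shows "vs ! i < vs ! j \<longleftrightarrow> \<pi> ! i < \<pi> ! j"
  using assms unfolding is_instance_def by auto

lemma caseB1:
  assumes pat: "\<forall>\<pi>\<in>S. is_pattern \<pi>" and h1: "\<not> (\<exists>\<pi>\<in>S. hd \<pi> = 1)" and n21: "[2, 1] \<notin> S"
  shows "FF (<) {1..n} \<subseteq> {p. rooted_forest n p \<and> forest_avoids n p S}"
proof
  fix p assume p: "p \<in> FF (<) {1..n}"
  have "forest_avoids n p S" unfolding forest_avoids_def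
  proof (intro ballI notI)
    fix \<pi> assume \<pi>: "\<pi> \<in> S" and "\<exists>vs. is_instance n p \<pi> vs"
    then obtain vs where inst: "is_instance n p \<pi> vs" by blast
    have ip: "is_pattern \<pi>" using pat \<pi> by auto
    have hd1: "hd \<pi> \<noteq> 1" using h1 \<pi> by auto
    have l3: "3 \<le> length \<pi>"
    proof (rule ccontr)
      assume "\<not> 3 \<le> length \<pi>"
      then have "\<pi> = [1] \<or> \<pi> = [1, 2] \<or> \<pi> = [2, 1]" using pat_short[OF ip] by auto
      then show False using hd1 n21 \<pi> by auto
    qed
    have "\<forall>j. 1 \<le> j \<and> j < length \<pi> \<longrightarrow> \<pi> ! 0 < \<pi> ! j"
    proof (intro allI impI)
      fix j assume j: "1 \<le> j \<and> j < length \<pi>"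
      then have "vs ! 0 < vs ! j" using FF_chain[OF p inst l3] by blast
      moreover have "0 < length \<pi>" "j < length \<pi>" using j by auto
      ultimately show "\<pi> ! 0 < \<pi> ! j" using instance_order[OF inst, of 0 j] by blast
    qed
    then show False using pat_min[OF ip] hd1 by simp
  qed
  then show "p \<in> {p. rooted_forest n p \<and> forest_avoids n p S}" using FF_rooted[OF p] by simp
qed

lemma caseB2:
  assumes pat: "\<forall>\<pi>\<in>S. is_pattern \<pi>" and h1: "\<not> (\<exists>\<pi>\<in>S. hd \<pi> = length \<pi>)" and n12: "[1, 2] \<notin> S"
  shows "FF (\<lambda>x y. y < x) {1..n} \<subseteq> {p. rooted_forest n p \<and> forest_avoids n p S}"
proof
  fix p assume p: "p \<in> FF (\<lambda>x y. y < x) {1..n}"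
  have "forest_avoids n p S" unfolding forest_avoids_def
  proof (intro ballI notI)
    fix \<pi> assume \<pi>: "\<pi> \<in> S" and "\<exists>vs. is_instance n p \<pi> vs"
    then obtain vs where inst: "is_instance n p \<pi> vs" by blast
    have ip: "is_pattern \<pi>" using pat \<pi> by auto
    have hd1: "hd \<pi> \<noteq> length \<pi>" using h1 \<pi> by auto
    have l3: "3 \<le> length \<pi>"
    proof (rule ccontr)
      assume "\<not> 3 \<le> length \<pi>"
      then have "\<pi> = [1] \<or> \<pi> = [1, 2] \<or> \<pi> = [2, 1]" using pat_short[OF ip] by auto
      then show False using hd1 n12 \<pi> by auto
    qed
    have "\<forall>j. 1 \<le> j \<and> j < length \<pi> \<longrightarrow> \<pi> ! j < \<pi> ! 0"
    proof (intro allI impI)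
      fix j assume j: "1 \<le> j \<and> j < length \<pi>"
      then have "vs ! j < vs ! 0" using FF_chain[OF p inst l3] by blast
      moreover have "0 < length \<pi>" "j < length \<pi>" using j by auto
      ultimately show "\<pi> ! j < \<pi> ! 0" using instance_order[OF inst, of j 0] by blast
    qed
    then show False using pat_max[OF ip] hd1 by simp
  qed
  then show "p \<in> {p. rooted_forest n p \<and> forest_avoids n p S}" using FF_rooted[OF p] by simp
qed

lemma num_lower:
  assumes "FF lt {1..n} \<subseteq> {p. rooted_forest n p \<and> forest_avoids n p S}"
    and hyp: "\<And>A. finite A \<Longrightarrow> A \<noteq> {} \<Longrightarrow> \<exists>a\<in>A. \<forall>v\<in>A-{a}. lt a v"
  shows "fact n * hh n \<le> real (num_avoiding S n)"
proof -
  have "fact (card {1..n}) * hh (card {1..n}) \<le> real (card (FF lt {1..n}))"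
    by (rule FF_lower[OF hyp]) auto
  also have "card (FF lt {1..n}) \<le> num_avoiding S n"
    unfolding num_avoiding_def using assms(1) by (intro card_mono finite_forests)
  finally show ?thesis by simp
qed

lemma hyp_min: "finite A \<Longrightarrow> A \<noteq> {} \<Longrightarrow> \<exists>a\<in>A. \<forall>v\<in>A-{a}. (a::nat) < v"
  by (intro bexI[of _ "Min A"]) (auto simp: order.not_eq_order_implies_strict)

lemma hyp_max: "finite A \<Longrightarrow> A \<noteq> {} \<Longrightarrow> \<exists>a\<in>A. \<forall>v\<in>A-{a}. (v::nat) < a"
  by (intro bexI[of _ "Max A"]) (auto simp: order.not_eq_order_implies_strict)

lemma inst2:
  assumes "v \<in> {1..n}" "p v \<noteq> 0" "(p v < v \<longleftrightarrow> a < b)" "(v < p v \<longleftrightarrow> b < a)"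
  shows "is_instance n p [a, b] [p v, v]"
proof -
  have e: "(v, p v) \<in> parent_rel n p" using assms(1,2) unfolding parent_rel_def by auto
  have "strict_ancestor n p (p v) v" unfolding strict_ancestor_def using e by auto
  then show ?thesis unfolding is_instance_def using assms(3,4)
    by (auto simp: less_Suc_eq nth_Cons')
qed

lemma ext_chain:
  assumes inst: "is_instance n p \<pi> vs" and sub: "parent_rel n p \<subseteq> {(x, y). lt x y}"
    and tr: "\<And>x y z. lt x y \<Longrightarrow> lt y z \<Longrightarrow> lt x z"
    and j: "1 \<le> j" "j < length \<pi>"
  shows "lt (vs ! j) (vs ! 0)"
proof -
  have T: "(parent_rel n p)\<^sup>+ \<subseteq> {(x, y). lt x y}"
  proof -
    have "trans {(x, y). lt x y}" using tr unfolding trans_def by blast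
    then show ?thesis using trancl_mono_subset[OF sub] trancl_id by blast
  qed
  have lv: "length vs = length \<pi>" using inst unfolding is_instance_def by simp
  have "(vs ! j, vs ! 0) \<in> (parent_rel n p)\<^sup>+" using instance_chain[OF inst, of 0 j] j lv by simp
  then show ?thesis using T by auto
qed

lemma caseA1:
  assumes pat: "\<forall>\<pi>\<in>S. is_pattern \<pi>" and h: "\<not> (\<exists>\<pi>\<in>S. hd \<pi> = length \<pi>)" and i12: "[1, 2] \<in> S"
  shows "{p. rooted_forest n p \<and> forest_avoids n p S}
       = {p. (\<forall>v. v \<notin> {1..n} \<longrightarrow> p v = 0) \<and> (\<forall>v\<in>{1..n}. p v \<in> insert 0 {v<..n})}"
proof (intro equalityI subsetI)
  fix p assume "p \<in> {p. rooted_forest n p \<and> forest_avoids n p S}"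
  then have rf: "rooted_forest n p" and av: "forest_avoids n p S" by auto
  have "p v \<in> insert 0 {v<..n}" if v: "v \<in> {1..n}" for v
  proof (cases "p v = 0")
    case True then show ?thesis by simp
  next
    case False
    have le: "p v \<le> n" using rf v unfolding rooted_forest_def by auto
    have e: "(v, p v) \<in> parent_rel n p" using v False unfolding parent_rel_def by auto
    have ne: "p v \<noteq> v"
    proof
      assume "p v = v"
      then have "(v, v) \<in> (parent_rel n p)\<^sup>+" using e by auto
      then show False using rf unfolding rooted_forest_def by blast
    qed
    have "v < p v"
    proof (rule ccontr)
      assume "\<not> v < p v"
      then have "p v < v" using ne by auto
      then have "is_instance n p [1, 2] [p v, v]" by (intro inst2[of v n p, OF v False]) auto
      then show False using av i12 unfolding forest_avoids_def by blast
    qed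
    then show ?thesis using le by auto
  qed
  then show "p \<in> {p. (\<forall>v. v \<notin> {1..n} \<longrightarrow> p v = 0) \<and> (\<forall>v\<in>{1..n}. p v \<in> insert 0 {v<..n})}"
    using rf unfolding rooted_forest_def by auto
next
  fix p assume p: "p \<in> {p. (\<forall>v. v \<notin> {1..n} \<longrightarrow> p v = 0) \<and> (\<forall>v\<in>{1..n}. p v \<in> insert 0 {v<..n})}"
  have sub: "parent_rel n p \<subseteq> {(x, y). x < y}"
  proof
    fix e assume "e \<in> parent_rel n p"
    then obtain v where v: "e = (v, p v)" "v \<in> {1..n}" "p v \<noteq> 0" unfolding parent_rel_def by auto
    then have "p v \<in> insert 0 {v<..n}" using p by blast
    then show "e \<in> {(x, y). x < y}" using v by auto
  qed
  have trl: "trans {(x::nat, y). x < y}" unfolding trans_def by auto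
  have T: "(parent_rel n p)\<^sup>+ \<subseteq> {(x, y). x < y}"
    using trancl_mono_subset[OF sub] trancl_id[OF trl] by auto
  have rf: "rooted_forest n p" unfolding rooted_forest_def using p T by fastforce
  have av: "forest_avoids n p S" unfolding forest_avoids_def
  proof (intro ballI notI)
    fix \<pi> assume \<pi>: "\<pi> \<in> S" and "\<exists>vs. is_instance n p \<pi> vs"
    then obtain vs where inst: "is_instance n p \<pi> vs" by blast
    have ip: "is_pattern \<pi>" using pat \<pi> by auto
    have "\<forall>j. 1 \<le> j \<and> j < length \<pi> \<longrightarrow> \<pi> ! j < \<pi> ! 0"
    proof (intro allI impI)
      fix j assume j: "1 \<le> j \<and> j < length \<pi>"
      have "vs ! j < vs ! 0" using ext_chain[OF inst sub, of j] j by auto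
      moreover have "0 < length \<pi>" "j < length \<pi>" using j by auto
      ultimately show "\<pi> ! j < \<pi> ! 0" using instance_order[OF inst, of j 0] by blast
    qed
    then show False using pat_max[OF ip] h \<pi> by auto
  qed
  show "p \<in> {p. rooted_forest n p \<and> forest_avoids n p S}" using rf av by simp
qed

lemma caseA2:
  assumes pat: "\<forall>\<pi>\<in>S. is_pattern \<pi>" and h: "\<not> (\<exists>\<pi>\<in>S. hd \<pi> = 1)" and i21: "[2, 1] \<in> S"
  shows "{p. rooted_forest n p \<and> forest_avoids n p S}
       = {p. (\<forall>v. v \<notin> {1..n} \<longrightarrow> p v = 0) \<and> (\<forall>v\<in>{1..n}. p v \<in> {..<v})}"
proof (intro equalityI subsetI)
  fix p assume "p \<in> {p. rooted_forest n p \<and> forest_avoids n p S}"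
  then have rf: "rooted_forest n p" and av: "forest_avoids n p S" by auto
  have "p v \<in> {..<v}" if v: "v \<in> {1..n}" for v
  proof (cases "p v = 0")
    case True then show ?thesis using v by simp
  next
    case False
    have e: "(v, p v) \<in> parent_rel n p" using v False unfolding parent_rel_def by auto
    have ne: "p v \<noteq> v"
    proof
      assume "p v = v"
      then have "(v, v) \<in> (parent_rel n p)\<^sup>+" using e by auto
      then show False using rf unfolding rooted_forest_def by blast
    qed
    have "p v < v"
    proof (rule ccontr)
      assume "\<not> p v < v"
      then have "v < p v" using ne by auto
      then have "is_instance n p [2, 1] [p v, v]" by (intro inst2[of v n p, OF v False]) auto
      then show False using av i21 unfolding forest_avoids_def by blast
    qed
    then show ?thesis by auto
  qed
  then show "p \<in> {p. (\<forall>v. v \<notin> {1..n} \<longrightarrow> p v = 0) \<and> (\<forall>v\<in>{1..n}. p v \<in> {..<v})}"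
    using rf unfolding rooted_forest_def by auto
next
  fix p assume p: "p \<in> {p. (\<forall>v. v \<notin> {1..n} \<longrightarrow> p v = 0) \<and> (\<forall>v\<in>{1..n}. p v \<in> {..<v})}"
  have sub: "parent_rel n p \<subseteq> {(x, y). y < x}"
  proof
    fix e assume "e \<in> parent_rel n p"
    then obtain v where v: "e = (v, p v)" "v \<in> {1..n}" "p v \<noteq> 0" unfolding parent_rel_def by auto
    then have "p v \<in> {..<v}" using p by blast
    then show "e \<in> {(x, y). y < x}" using v by auto
  qed
  have trg: "trans {(x::nat, y). y < x}" unfolding trans_def by auto
  have T: "(parent_rel n p)\<^sup>+ \<subseteq> {(x, y). y < x}"
    using trancl_mono_subset[OF sub] trancl_id[OF trg] by auto
  have rf: "rooted_forest n p" unfolding rooted_forest_def using p T by fastforce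
  have av: "forest_avoids n p S" unfolding forest_avoids_def
  proof (intro ballI notI)
    fix \<pi> assume \<pi>: "\<pi> \<in> S" and "\<exists>vs. is_instance n p \<pi> vs"
    then obtain vs where inst: "is_instance n p \<pi> vs" by blast
    have ip: "is_pattern \<pi>" using pat \<pi> by auto
    have "\<forall>j. 1 \<le> j \<and> j < length \<pi> \<longrightarrow> \<pi> ! 0 < \<pi> ! j"
    proof (intro allI impI)
      fix j assume j: "1 \<le> j \<and> j < length \<pi>"
      have "vs ! 0 < vs ! j" using ext_chain[OF inst sub, of j] j by auto
      moreover have "0 < length \<pi>" "j < length \<pi>" using j by auto
      ultimately show "\<pi> ! 0 < \<pi> ! j" using instance_order[OF inst, of 0 j] by blast
    qed
    then show False using pat_min[OF ip] h \<pi> by auto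
  qed
  show "p \<in> {p. rooted_forest n p \<and> forest_avoids n p S}" using rf av by simp
qed

lemma cardA1: "card {p. (\<forall>v. v \<notin> {1..n} \<longrightarrow> p v = 0) \<and> (\<forall>v\<in>{1..n}. p v \<in> insert 0 {v<..n})} = fact n"
proof -
  have "card {p. (\<forall>v. v \<notin> {1..n} \<longrightarrow> p v = 0) \<and> (\<forall>v\<in>{1..n}. p v \<in> insert 0 {v<..n})}
        = (\<Prod>v\<in>{1..n}. card (insert 0 {v<..n}))" by (rule card_funs) simp
  also have "\<dots> = (\<Prod>v\<in>{1..n}. n + 1 - v)"
    by (intro prod.cong) auto
  also have "\<dots> = (\<Prod>v\<in>{1..n}. v)"
    using prod.atLeastAtMost_rev[of "\<lambda>i. i" 1 n] by simp
  also have "\<dots> = fact n" by (simp add: fact_prod)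
  finally show ?thesis .
qed

lemma cardA2: "card {p. (\<forall>v. v \<notin> {1..n} \<longrightarrow> p v = 0) \<and> (\<forall>v\<in>{1..n}. p v \<in> {..<v})} = fact n"
proof -
  have "card {p. (\<forall>v. v \<notin> {1..n} \<longrightarrow> p v = 0) \<and> (\<forall>v\<in>{1..n}. p v \<in> {..<v})}
        = (\<Prod>v\<in>{1..n}. card {..<v})" by (rule card_funs) simp
  also have "\<dots> = (\<Prod>v\<in>{1..n}. v)" by simp
  also have "\<dots> = fact n" by (simp add: fact_prod)
  finally show ?thesis .
qed

theorem proposition5p11:
  fixes S :: "nat list set"
  assumes "\<forall>\<pi> \<in> S. is_pattern \<pi>"
    and "\<not> covered S"
  shows "((\<lambda>n. root n (real (num_avoiding S n)) / real n) \<longlonglongrightarrow> exp (-1))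
         \<longleftrightarrow> ([1, 2] \<in> S \<or> [2, 1] \<in> S)"
proof
  have pat: "\<forall>\<pi> \<in> S. is_pattern \<pi>" using assms(1) .
  have unc: "\<not> (\<exists>\<pi>\<in>S. hd \<pi> = 1) \<or> \<not> (\<exists>\<sigma>\<in>S. hd \<sigma> = length \<sigma>)"
    using assms(2) unfolding covered_def by blast
  show "[1, 2] \<in> S \<or> [2, 1] \<in> S"
    if lim: "(\<lambda>n. root n (real (num_avoiding S n)) / real n) \<longlonglongrightarrow> exp (-1)"
  proof (rule ccontr)
    assume "\<not> ([1, 2] \<in> S \<or> [2, 1] \<in> S)"
    then have n12: "[1, 2] \<notin> S" and n21: "[2, 1] \<notin> S" by auto
    define u :: real where "u = 21/20"
    have low: "fact n * hh n \<le> real (num_avoiding S n)" for n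
    proof (cases "\<exists>\<pi>\<in>S. hd \<pi> = 1")
      case False
      show ?thesis by (rule num_lower[OF caseB1[OF pat False n21] hyp_min])
    next
      case True
      then have "\<not> (\<exists>\<sigma>\<in>S. hd \<sigma> = length \<sigma>)" using unc by blast
      then show ?thesis by (rule num_lower[OF caseB2[OF pat _ n12] hyp_max])
    qed
    have ev: "\<forall>n\<ge>2. u * (root n (fact n) / real n) \<le> root n (real (num_avoiding S n)) / real n"
    proof (intro allI impI)
      fix n :: nat assume n: "2 \<le> n"
      have hn: "hh n = (11/10) * u ^ n" unfolding hh_def u_def using n by auto
      have "fact n * u ^ n \<le> fact n * hh n" unfolding hn u_def by simp
      also have "\<dots> \<le> real (num_avoiding S n)" by (rule low)
      finally have le: "fact n * u ^ n \<le> real (num_avoiding S n)" .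
      have n0: "0 < n" using n by simp
      have "root n (fact n * u ^ n) = root n (fact n) * u"
        unfolding real_root_mult using real_root_power_cancel[OF n0, of u] unfolding u_def by simp
      then have "root n (fact n) * u \<le> root n (real (num_avoiding S n))"
        using le n0 by (metis real_root_le_iff)
      then show "u * (root n (fact n) / real n) \<le> root n (real (num_avoiding S n)) / real n"
        using n0 by (simp add: divide_right_mono mult.commute)
    qed
    have "(\<lambda>n. u * (root n (fact n) / real n)) \<longlonglongrightarrow> u * exp (-1)"
      by (intro tendsto_mult tendsto_const root_fact_limit)
    then have "u * exp (-1) \<le> exp (-1)" using lim ev by (intro LIMSEQ_le) auto
    moreover have "exp (-1) > (0::real)" by simp
    ultimately show False unfolding u_def by simp
  qed
  show "(\<lambda>n. root n (real (num_avoiding S n)) / real n) \<longlonglongrightarrow> exp (-1)"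
    if h: "[1, 2] \<in> S \<or> [2, 1] \<in> S"
  proof -
    have "num_avoiding S n = fact n" for n
    proof (cases "[1, 2] \<in> S")
      case True
      then have "\<not> (\<exists>\<sigma>\<in>S. hd \<sigma> = length \<sigma>)" using unc by force
      then show ?thesis unfolding num_avoiding_def using caseA1[OF pat _ True] cardA1 by simp
    next
      case False
      then have i21: "[2, 1] \<in> S" using h by simp
      then have "\<not> (\<exists>\<pi>\<in>S. hd \<pi> = 1)" using unc by force
      then show ?thesis unfolding num_avoiding_def using caseA2[OF pat _ i21] cardA2 by simp
    qed
    then show ?thesis using root_fact_limit by simp
  qed
qed

end
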